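(* Let $\Sigma$ be a finite alphabet, $p\in\Sigma^{++}$ and $\theta=\llbracket\hat p\rrbracket$. Then $p$ is regional (i.e. admits a regional homogeneous partition) if and only if both directed graphs with vertex set $\Sigma$ and edge relations $\mathcal A_\theta\cap\Sigma^2$ and $\mathcal A'_\theta\cap\Sigma^2$, respectively, are acyclic.
   Context: A picture over $\Sigma$ is a nonempty rectangular array of symbols of $\Sigma$, $\Sigma^{++}$ the set of all of them; $p(i,j)$ is the pixel in row $i$, column $j$; for $\#\notin\Sigma$, $\hat p$ is $p$ surrounded by a one-pixel frame of $\#$'s. A tile is a $2\times 2$ picture; $\llbracket q\rrbracket$ is the set of all $2\times2$ subpictures (on consecutive rows and columns) of $q$. A subdomain of $p$ is a rectangle $\{x,\dots,x'\}\times\{y,\dots,y'\}$ of positions; it is $C$-homogeneous (label $C$) if all its pixels equal $C$. A homogeneous partition of $p$ is a partition of its set of positions into homogeneous subdomains; it is regional if distinct subdomains have distinct labels; $p$ is regional if it admits a regional homogeneous partition. Adjacency relations: for a tile $t$ over $\Sigma\cup\{\#\}$ define relations $\mathcal H_t,\mathcal V_t\subseteq(\Sigma\cup\{\#\})^2$ by: for $i=1,2$, $t(i,1)\,\mathcal H_t\,t(i,2)$ iff $t(i,1)\ne t(i,2)$; for $j=1,2$, $t(1,j)\,\mathcal V_t\,t(2,j)$ iff $t(1,j)\neq t(2,j)$ (and these are the only pairs). Let $\mathcal A_t=\mathcal H_t\cup\mathcal V_t$ and $\mathcal A'_t=\mathcal H_t^{-1}\cup\mathcal V_t$. For a set $\theta$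 of tiles, $x\,\mathcal H_\theta\,y$ iff $x\,\mathcal H_t\,y$ for some $t\in\theta$, and similarly for $\mathcal V_\theta,\mathcal A_\theta,\mathcal A'_\theta$. A tile set $\theta$ for which the graphs of $\mathcal A_\theta\cap\Sigma^2$ and $\mathcal A'_\theta\cap\Sigma^2$ are both acyclic is called simple regional. *)

theory Defs
  imports Main
begin

(* A picture of size m x n is a function p :: nat => nat => 'a, meaningful on
   rows 1..m and columns 1..n. *)
definition is_picture :: "'a set \<Rightarrow> nat \<Rightarrow> nat \<Rightarrow> (nat \<Rightarrow> nat \<Rightarrow> 'a) \<Rightarrow> bool" where
  "is_picture \<Sigma> m n p \<longleftrightarrow> 1 \<le> m \<and> 1 \<le> n \<and> (\<forall>i\<in>{1..m}. \<forall>j\<in>{1..n}. p i j \<in> \<Sigma>)"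

(* framed picture \<hat>p, of size (m+2) x (n+2), rows/columns 1..m+2 / 1..n+2;
   the border symbol # is None, symbols of \<Sigma> are embedded via Some *)
definition frame :: "nat \<Rightarrow> nat \<Rightarrow> (nat \<Rightarrow> nat \<Rightarrow> 'a) \<Rightarrow> nat \<Rightarrow> nat \<Rightarrow> 'a option" where
  "frame m n p i j = (if 2 \<le> i \<and> i \<le> m + 1 \<and> 2 \<le> j \<and> j \<le> n + 1
                      then Some (p (i - 1) (j - 1)) else None)"

(* a tile t is represented as (t(1,1), t(1,2), t(2,1), t(2,2)) *)
type_synonym 'b tile = "'b \<times> 'b \<times> 'b \<times> 'b"

definition tiles :: "nat \<Rightarrow> nat \<Rightarrow> (nat \<Rightarrow> nat \<Rightarrow> 'b) \<Rightarrow> 'b tile set" where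
  "tiles r c q = {(q i j, q i (j + 1), q (i + 1) j, q (i + 1) (j + 1)) | i j.
                    1 \<le> i \<and> i < r \<and> 1 \<le> j \<and> j < c}"

fun H_tile :: "'b tile \<Rightarrow> ('b \<times> 'b) set" where
  "H_tile (a, b, c, d) = {(x, y). ((x, y) = (a, b) \<and> a \<noteq> b) \<or> ((x, y) = (c, d) \<and> c \<noteq> d)}"

fun V_tile :: "'b tile \<Rightarrow> ('b \<times> 'b) set" where
  "V_tile (a, b, c, d) = {(x, y). ((x, y) = (a, c) \<and> a \<noteq> c) \<or> ((x, y) = (b, d) \<and> b \<noteq> d)}"

definition A_tile :: "'b tile \<Rightarrow> ('b \<times> 'b) set" where
  "A_tile t = H_tile t \<union> V_tile t"

definition A'_tile :: "'b tile \<Rightarrow> ('b \<times> 'b) set" where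
  "A'_tile t = (H_tile t)\<inverse> \<union> V_tile t"

definition A_set :: "'b tile set \<Rightarrow> ('b \<times> 'b) set" where
  "A_set \<theta> = (\<Union>t\<in>\<theta>. A_tile t)"

definition A'_set :: "'b tile set \<Rightarrow> ('b \<times> 'b) set" where
  "A'_set \<theta> = (\<Union>t\<in>\<theta>. A'_tile t)"

(* R \<inter> \<Sigma>^2, with \<Sigma> embedded in \<Sigma> \<union> {#} via Some *)
definition restrict_sigma :: "'a set \<Rightarrow> ('a option \<times> 'a option) set \<Rightarrow> ('a \<times> 'a) set" where
  "restrict_sigma \<Sigma> R = {(x, y). x \<in> \<Sigma> \<and> y \<in> \<Sigma> \<and> (Some x, Some y) \<in> R}"

definition is_subdomain :: "nat \<Rightarrow> nat \<Rightarrow> (nat \<times> nat) set \<Rightarrow> bool" where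
  "is_subdomain m n D \<longleftrightarrow> (\<exists>x x' y y'. 1 \<le> x \<and> x \<le> x' \<and> x' \<le> m \<and> 1 \<le> y \<and> y \<le> y' \<and> y' \<le> n
                                 \<and> D = {x..x'} \<times> {y..y'})"

definition homogeneous :: "(nat \<Rightarrow> nat \<Rightarrow> 'a) \<Rightarrow> (nat \<times> nat) set \<Rightarrow> 'a \<Rightarrow> bool" where
  "homogeneous p D C \<longleftrightarrow> (\<forall>(i, j)\<in>D. p i j = C)"

definition homogeneous_partition ::
  "nat \<Rightarrow> nat \<Rightarrow> (nat \<Rightarrow> nat \<Rightarrow> 'a) \<Rightarrow> (nat \<times> nat) set set \<Rightarrow> bool" where
  "homogeneous_partition m n p P \<longleftrightarrow>
     (\<forall>D\<in>P. is_subdomain m n D \<and> (\<exists>C. homogeneous p D C)) \<and>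
     (\<forall>D\<in>P. \<forall>D'\<in>P. D \<noteq> D' \<longrightarrow> D \<inter> D' = {}) \<and>
     \<Union>P = {1..m} \<times> {1..n}"

definition regional_partition ::
  "nat \<Rightarrow> nat \<Rightarrow> (nat \<Rightarrow> nat \<Rightarrow> 'a) \<Rightarrow> (nat \<times> nat) set set \<Rightarrow> bool" where
  "regional_partition m n p P \<longleftrightarrow> homogeneous_partition m n p P \<and>
     (\<forall>D\<in>P. \<forall>D'\<in>P. \<forall>C C'. D \<noteq> D' \<longrightarrow> homogeneous p D C \<longrightarrow> homogeneous p D' C' \<longrightarrow> C \<noteq> C')"

definition regional :: "nat \<Rightarrow> nat \<Rightarrow> (nat \<Rightarrow> nat \<Rightarrow> 'a) \<Rightarrow> bool" where
  "regional m n p \<longleftrightarrow> (\<exists>P. regional_partition m n p P)"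

end

theory Submission
  imports Defs
begin


lemma frame_Some: "frame m n p i j = Some x \<longleftrightarrow> (2 \<le> i \<and> i \<le> m+1 \<and> 2 \<le> j \<and> j \<le> n+1 \<and> x = p (i-1) (j-1))"
  by (auto simp: frame_def)

lemma tile_mem: "1 \<le> i \<Longrightarrow> i \<le> m+1 \<Longrightarrow> 1 \<le> j \<Longrightarrow> j \<le> n+1 \<Longrightarrow>
  (frame m n p i j, frame m n p i (j+1), frame m n p (i+1) j, frame m n p (i+1) (j+1))
   \<in> tiles (m+2) (n+2) (frame m n p)"
  unfolding tiles_def by fastforce

lemma E_D:
  assumes "(x,y) \<in> restrict_sigma \<Sigma> (A_set (tiles (m+2) (n+2) (frame m n p)))"
  shows "x \<noteq> y \<and> (\<exists>i j i' j'. 1\<le>i \<and> i\<le>m \<and> 1\<le>j \<and> j\<le>n \<and> 1 \<le> i' \<and> i' \<le> m \<and> 1\<le>j' \<and> j'\<le>n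
     \<and> p i j = x \<and> p i' j' = y \<and> i \<le> i' \<and> j \<le> j')"
proof -
  let ?f = "frame m n p"
  from assms obtain i j where ij: "1 \<le> i" "i < m+2" "1 \<le> j" "j < n+2"
    and A: "(Some x, Some y) \<in> A_tile (?f i j, ?f i (j+1), ?f (i+1) j, ?f (i+1) (j+1))"
    unfolding restrict_sigma_def A_set_def tiles_def by blast
  from A have "(?f i j = Some x \<and> ?f i (j+1) = Some y \<and> x \<noteq> y) \<or> (?f (i+1) j = Some x \<and> ?f (i+1) (j+1) = Some y \<and> x \<noteq> y)
     \<or> (?f i j = Some x \<and> ?f (i+1) j = Some y \<and> x \<noteq> y) \<or> (?f i (j+1) = Some x \<and> ?f (i+1) (j+1) = Some y \<and> x \<noteq> y)"
    unfolding A_tile_def by auto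
  then show ?thesis
  proof (elim disjE conjE)
    assume "?f i j = Some x" "?f i (j+1) = Some y" "x \<noteq> y"
    then show ?thesis unfolding frame_Some
      apply -
      apply (elim conjE)
      apply (rule conjI, simp)
      apply (rule exI[of _ "i-1"], rule exI[of _ "j-1"], rule exI[of _ "i-1"], rule exI[of _ "j"])
      apply (simp; linarith)
      done
  next
    assume "?f (i+1) j = Some x" "?f (i+1) (j+1) = Some y" "x \<noteq> y"
    then show ?thesis unfolding frame_Some
      apply -
      apply (elim conjE)
      apply (rule conjI, simp)
      apply (rule exI[of _ "i"], rule exI[of _ "j-1"], rule exI[of _ "i"], rule exI[of _ "j"])
      apply (simp; linarith)
      done
  next
    assume "?f i j = Some x" "?f (i+1) j = Some y" "x \<noteq> y"
    then show ?thesis unfolding frame_Some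
      apply -
      apply (elim conjE)
      apply (rule conjI, simp)
      apply (rule exI[of _ "i-1"], rule exI[of _ "j-1"], rule exI[of _ "i"], rule exI[of _ "j-1"])
      apply (simp; linarith)
      done
  next
    assume "?f i (j+1) = Some x" "?f (i+1) (j+1) = Some y" "x \<noteq> y"
    then show ?thesis unfolding frame_Some
      apply -
      apply (elim conjE)
      apply (rule conjI, simp)
      apply (rule exI[of _ "i-1"], rule exI[of _ "j"], rule exI[of _ "i"], rule exI[of _ "j"])
      apply (simp; linarith)
      done
  qed
qed

lemma E'_D:
  assumes "(x,y) \<in> restrict_sigma \<Sigma> (A'_set (tiles (m+2) (n+2) (frame m n p)))"
  shows "x \<noteq> y \<and> (\<exists>i j i' j'. 1\<le>i \<and> i\<le>m \<and> 1\<le>j \<and> j\<le>n \<and> 1 \<le> i' \<and> i' \<le> m \<and> 1\<le>j' \<and> j'\<le>n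
     \<and> p i j = x \<and> p i' j' = y \<and> i \<le> i' \<and> j' \<le> j)"
proof -
  let ?f = "frame m n p"
  from assms obtain i j where ij: "1 \<le> i" "i < m+2" "1 \<le> j" "j < n+2"
    and A: "(Some x, Some y) \<in> A'_tile (?f i j, ?f i (j+1), ?f (i+1) j, ?f (i+1) (j+1))"
    unfolding restrict_sigma_def A'_set_def tiles_def by blast
  from A have "(?f i j = Some y \<and> ?f i (j+1) = Some x \<and> x \<noteq> y) \<or> (?f (i+1) j = Some y \<and> ?f (i+1) (j+1) = Some x \<and> x \<noteq> y)
     \<or> (?f i j = Some x \<and> ?f (i+1) j = Some y \<and> x \<noteq> y) \<or> (?f i (j+1) = Some x \<and> ?f (i+1) (j+1) = Some y \<and> x \<noteq> y)"
    unfolding A'_tile_def by auto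
  then show ?thesis
  proof (elim disjE conjE)
    assume "?f i j = Some y" "?f i (j+1) = Some x" "x \<noteq> y"
    then show ?thesis unfolding frame_Some
      apply -
      apply (elim conjE)
      apply (rule conjI, simp)
      apply (rule exI[of _ "i-1"], rule exI[of _ "j"], rule exI[of _ "i-1"], rule exI[of _ "j-1"])
      apply (simp; linarith)
      done
  next
    assume "?f (i+1) j = Some y" "?f (i+1) (j+1) = Some x" "x \<noteq> y"
    then show ?thesis unfolding frame_Some
      apply -
      apply (elim conjE)
      apply (rule conjI, simp)
      apply (rule exI[of _ "i"], rule exI[of _ "j"], rule exI[of _ "i"], rule exI[of _ "j-1"])
      apply (simp; linarith)
      done
  next
    assume "?f i j = Some x" "?f (i+1) j = Some y" "x \<noteq> y"
    then show ?thesis unfolding frame_Some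
      apply -
      apply (elim conjE)
      apply (rule conjI, simp)
      apply (rule exI[of _ "i-1"], rule exI[of _ "j-1"], rule exI[of _ "i"], rule exI[of _ "j-1"])
      apply (simp; linarith)
      done
  next
    assume "?f i (j+1) = Some x" "?f (i+1) (j+1) = Some y" "x \<noteq> y"
    then show ?thesis unfolding frame_Some
      apply -
      apply (elim conjE)
      apply (rule conjI, simp)
      apply (rule exI[of _ "i-1"], rule exI[of _ "j"], rule exI[of _ "i"], rule exI[of _ "j"])
      apply (simp; linarith)
      done
  qed
qed

lemma E_right:
  assumes "1 \<le> i" "i \<le> m" "1 \<le> j" "j < n" "p i j \<in> \<Sigma>" "p i (Suc j) \<in> \<Sigma>" "p i j \<noteq> p i (Suc j)"
  shows "(p i j, p i (Suc j)) \<in> restrict_sigma \<Sigma> (A_set (tiles (m+2) (n+2) (frame m n p)))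
       \<and> (p i (Suc j), p i j) \<in> restrict_sigma \<Sigma> (A'_set (tiles (m+2) (n+2) (frame m n p)))"
proof -
  let ?f = "frame m n p"
  have t: "(?f (i+1) (j+1), ?f (i+1) (j+1+1), ?f (i+1+1) (j+1), ?f (i+1+1) (j+1+1))
   \<in> tiles (m+2) (n+2) (frame m n p)" using assms by (intro tile_mem) auto
  have f1: "?f (i+1) (j+1) = Some (p i j)" "?f (i+1) (j+1+1) = Some (p i (Suc j))"
    using assms by (auto simp: frame_Some)
  have "(Some (p i j), Some (p i (Suc j))) \<in> A_tile (?f (i+1) (j+1), ?f (i+1) (j+1+1), ?f (i+1+1) (j+1), ?f (i+1+1) (j+1+1))"
    "(Some (p i (Suc j)), Some (p i j)) \<in> A'_tile (?f (i+1) (j+1), ?f (i+1) (j+1+1), ?f (i+1+1) (j+1), ?f (i+1+1) (j+1+1))"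
    unfolding f1 A_tile_def A'_tile_def using assms(7) by auto
  then show ?thesis using t assms(5-7) unfolding restrict_sigma_def A_set_def A'_set_def
    by blast
qed

lemma E_down:
  assumes "1 \<le> i" "i < m" "1 \<le> j" "j \<le> n" "p i j \<in> \<Sigma>" "p (Suc i) j \<in> \<Sigma>" "p i j \<noteq> p (Suc i) j"
  shows "(p i j, p (Suc i) j) \<in> restrict_sigma \<Sigma> (A_set (tiles (m+2) (n+2) (frame m n p)))
       \<and> (p i j, p (Suc i) j) \<in> restrict_sigma \<Sigma> (A'_set (tiles (m+2) (n+2) (frame m n p)))"
proof -
  let ?f = "frame m n p"
  have t: "(?f (i+1) (j+1), ?f (i+1) (j+1+1), ?f (i+1+1) (j+1), ?f (i+1+1) (j+1+1))
   \<in> tiles (m+2) (n+2) (frame m n p)" using assms by (intro tile_mem) auto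
  have f1: "?f (i+1) (j+1) = Some (p i j)" "?f (i+1+1) (j+1) = Some (p (Suc i) j)"
    using assms by (auto simp: frame_Some)
  have "(Some (p i j), Some (p (Suc i) j)) \<in> A_tile (?f (i+1) (j+1), ?f (i+1) (j+1+1), ?f (i+1+1) (j+1), ?f (i+1+1) (j+1+1))"
    "(Some (p i j), Some (p (Suc i) j)) \<in> A'_tile (?f (i+1) (j+1), ?f (i+1) (j+1+1), ?f (i+1+1) (j+1), ?f (i+1+1) (j+1+1))"
    unfolding f1 A_tile_def A'_tile_def using assms(7) by auto
  then show ?thesis using t assms(5-7) unfolding restrict_sigma_def A_set_def A'_set_def
    by blast
qed



lemma source_exists:
  fixes K :: "'x set" and P1 Q1 P2 Q2 :: "'x \<Rightarrow> int"
  assumes "finite K" "K \<noteq> {}"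
   and "\<forall>c\<in>K. P1 c \<le> Q1 c \<and> P2 c \<le> Q2 c"
   and "\<forall>c\<in>K. \<forall>d\<in>K. c \<noteq> d \<longrightarrow> \<not> (P1 c \<le> Q1 d \<and> P2 c \<le> Q2 d \<and> P1 d \<le> Q1 c \<and> P2 d \<le> Q2 c)"
  shows "\<exists>m\<in>K. \<forall>z\<in>K. z \<noteq> m \<longrightarrow> \<not> (P1 z \<le> Q1 m \<and> P2 z \<le> Q2 m)"
  using assms
proof (induction "card K" arbitrary: K rule: less_induct)
  case less
  have "Min (Q1 ` K) \<in> Q1 ` K" using less.prems(1,2) by (intro Min_in) auto
  then obtain c where c: "c \<in> K" "Q1 c = Min (Q1 ` K)" by (metis imageE)
  have cmin: "\<forall>d\<in>K. Q1 c \<le> Q1 d" using c less.prems(1) by simp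
  show ?case
  proof (cases "K - {c} = {}")
    case True
    then have "K = {c}" using c by auto
    then show ?thesis by simp
  next
    case False
    have "\<exists>mm\<in>K - {c}. \<forall>z\<in>K - {c}. z \<noteq> mm \<longrightarrow> \<not> (P1 z \<le> Q1 mm \<and> P2 z \<le> Q2 mm)"
    proof (rule less.hyps)
      show "card (K - {c}) < card K" using card_Diff1_less[OF less.prems(1) c(1)] .
      show "finite (K - {c})" using less.prems(1) by simp
      show "K - {c} \<noteq> {}" by fact
      show "\<forall>c\<in>K - {c}. P1 c \<le> Q1 c \<and> P2 c \<le> Q2 c" using less.prems(3) by blast
      show "\<forall>ca\<in>K - {c}. \<forall>d\<in>K - {c}. ca \<noteq> d \<longrightarrow> \<not> (P1 ca \<le> Q1 d \<and> P2 ca \<le> Q2 d \<and> P1 d \<le> Q1 ca \<and> P2 d \<le> Q2 ca)"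
        using less.prems(4) by blast
    qed
    then obtain mm where mm1: "mm \<in> K" "mm \<noteq> c" and mm: "\<And>z. z \<in> K \<Longrightarrow> z \<noteq> c \<Longrightarrow> z \<noteq> mm \<Longrightarrow> \<not> (P1 z \<le> Q1 mm \<and> P2 z \<le> Q2 mm)"
      by blast
    show ?thesis
    proof (cases "P1 c \<le> Q1 mm \<and> P2 c \<le> Q2 mm")
      case False
      show ?thesis
      proof (rule bexI[of _ mm])
        show "mm \<in> K" by fact
        show "\<forall>z\<in>K. z \<noteq> mm \<longrightarrow> \<not> (P1 z \<le> Q1 mm \<and> P2 z \<le> Q2 mm)"
        proof (intro ballI impI)
          fix z assume z: "z \<in> K" "z \<noteq> mm"
          show "\<not> (P1 z \<le> Q1 mm \<and> P2 z \<le> Q2 mm)"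
          proof (cases "z = c")
            case True then show ?thesis using False by simp
          next
            case False then show ?thesis using mm z by blast
          qed
        qed
      qed
    next
      case True
      show ?thesis
      proof (rule bexI[of _ c])
        show "c \<in> K" by fact
        show "\<forall>z\<in>K. z \<noteq> c \<longrightarrow> \<not> (P1 z \<le> Q1 c \<and> P2 z \<le> Q2 c)"
        proof (intro ballI impI notI)
          fix z assume z: "z \<in> K" "z \<noteq> c" and zc: "P1 z \<le> Q1 c \<and> P2 z \<le> Q2 c"
          have q1: "Q1 c \<le> Q1 z" "Q1 c \<le> Q1 mm" using cmin z mm1 by auto
          have q2: "P1 c \<le> Q1 c" "P2 z \<le> Q2 z" using less.prems(3) c z by auto
          have "\<not> (P1 z \<le> Q1 c \<and> P2 z \<le> Q2 c \<and> P1 c \<le> Q1 z \<and> P2 c \<le> Q2 z)"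
            using less.prems(4) z c by blast
          then have "Q2 z < P2 c" using zc q1 q2 by linarith
          have zm: "P1 z \<le> Q1 mm \<and> P2 z \<le> Q2 mm"
            using zc True q1 q2 \<open>Q2 z < P2 c\<close> by linarith
          show False
          proof (cases "z = mm")
            case True
            have "\<not> (P1 mm \<le> Q1 c \<and> P2 mm \<le> Q2 c \<and> P1 c \<le> Q1 mm \<and> P2 c \<le> Q2 mm)"
              using less.prems(4) mm1 c(1) by blast
            then show False using \<open>P1 c \<le> Q1 mm \<and> P2 c \<le> Q2 mm\<close> zc True by simp
          next
            case False
            then show False using mm z zm by blast
          qed
        qed
      qed
    qed
  qed
qed

lemma wf_from_rect:
  fixes R :: "('x \<times> 'x) set" and P1 Q1 P2 Q2 :: "'x \<Rightarrow> int"
  assumes "finite App"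
   and edge: "\<And>y z. (y,z) \<in> R \<Longrightarrow> y \<in> App \<and> z \<in> App \<and> y \<noteq> z \<and> P1 y \<le> Q1 z \<and> P2 y \<le> Q2 z"
   and "\<forall>c\<in>App. P1 c \<le> Q1 c \<and> P2 c \<le> Q2 c"
   and "\<forall>c\<in>App. \<forall>d\<in>App. c \<noteq> d \<longrightarrow> \<not> (P1 c \<le> Q1 d \<and> P2 c \<le> Q2 d \<and> P1 d \<le> Q1 c \<and> P2 d \<le> Q2 c)"
  shows "wf R"
proof (rule wfI_min)
  fix x and Q :: "'x set" assume xQ: "x \<in> Q"
  show "\<exists>z\<in>Q. \<forall>y. (y, z) \<in> R \<longrightarrow> y \<notin> Q"
  proof (cases "Q \<inter> App = {}")
    case True
    then show ?thesis using xQ edge by blast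
  next
    case False
    obtain mm where mm: "mm \<in> Q \<inter> App" "\<forall>z\<in>Q \<inter> App. z \<noteq> mm \<longrightarrow> \<not> (P1 z \<le> Q1 mm \<and> P2 z \<le> Q2 mm)"
      using source_exists[of "Q \<inter> App" P1 Q1 P2 Q2] False assms(1,3,4) by auto
    show ?thesis using mm edge by blast
  qed
qed

lemma acyc_eq: "acyclic R \<Longrightarrow> (a,b) \<in> R\<^sup>* \<Longrightarrow> (b,a) \<in> R\<^sup>* \<Longrightarrow> a = b"
  by (metis acyclic_def rtranclD trancl_rtrancl_trancl)

lemma box_sub:
  fixes S :: "(nat \<times> nat) set"
  assumes sub: "S \<subseteq> {1..m}\<times>{1..n}" and ne: "S \<noteq> {}"
   and box: "\<And>i1 j1 i2 j2 i j. (i1,j1)\<in>S \<Longrightarrow> (i2,j2)\<in>S \<Longrightarrow> min i1 i2 \<le> i \<Longrightarrow> i \<le> max i1 i2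
      \<Longrightarrow> min j1 j2 \<le> j \<Longrightarrow> j \<le> max j1 j2 \<Longrightarrow> (i,j)\<in>S"
  shows "is_subdomain m n S"
proof -
  have fin: "finite S" using sub finite_subset by blast
  define x where "x = Min (fst ` S)"
  define x' where "x' = Max (fst ` S)"
  define y where "y = Min (snd ` S)"
  define y' where "y' = Max (snd ` S)"
  have "x \<in> fst ` S" unfolding x_def using fin ne by (intro Min_in) auto
  then obtain ja where ja: "(x,ja) \<in> S" by force
  have "x' \<in> fst ` S" unfolding x'_def using fin ne by (intro Max_in) auto
  then obtain jb where jb: "(x',jb) \<in> S" by force
  have "y \<in> snd ` S" unfolding y_def using fin ne by (intro Min_in) auto
  then obtain ia where ia: "(ia,y) \<in> S" by force
  have "y' \<in> snd ` S" unfolding y'_def using fin ne by (intro Max_in) auto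
  then obtain ib where ib: "(ib,y') \<in> S" by force
  have lo: "\<And>i j. (i,j) \<in> S \<Longrightarrow> x \<le> i \<and> i \<le> x' \<and> y \<le> j \<and> j \<le> y'"
  proof -
    fix i j assume ij: "(i,j) \<in> S"
    have "i \<in> fst ` S" "j \<in> snd ` S" using ij by force+
    then show "x \<le> i \<and> i \<le> x' \<and> y \<le> j \<and> j \<le> y'"
      unfolding x_def x'_def y_def y'_def using fin by auto
  qed
  have eq: "S = {x..x'} \<times> {y..y'}"
  proof
    show "S \<subseteq> {x..x'} \<times> {y..y'}" using lo by auto
  next
    show "{x..x'} \<times> {y..y'} \<subseteq> S"
    proof clarify
      fix i j assume ij: "i \<in> {x..x'}" "j \<in> {y..y'}"
      have 1: "(i,ja) \<in> S" using box[OF ja jb, of i ja] ij by auto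
      have 2: "(ia,j) \<in> S" using box[OF ia ib, of ia j] ij by auto
      show "(i,j) \<in> S" using box[OF 1 2, of i j] by auto
    qed
  qed
  have "1 \<le> x" "x' \<le> m" "1 \<le> y" "y' \<le> n" using ja jb ia ib sub by auto
  moreover have "x \<le> x'" "y \<le> y'" using lo[OF ja] by auto
  ultimately show ?thesis unfolding is_subdomain_def eq by blast
qed



definition EE where "EE \<Sigma> m n p = restrict_sigma \<Sigma> (A_set (tiles (m+2) (n+2) (frame m n p)))"
definition EE' where "EE' \<Sigma> m n p = restrict_sigma \<Sigma> (A'_set (tiles (m+2) (n+2) (frame m n p)))"
definition occ where "occ m n p c = {(i,j). 1\<le>i \<and> i\<le>m \<and> 1\<le>j \<and> j\<le>n \<and> p i j = c}"

lemma path_h: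
  assumes pic: "\<forall>i\<in>{1..m}. \<forall>j\<in>{1..n}. p i j \<in> \<Sigma>" and i: "1\<le>i" "i\<le>m" and j: "1\<le>j1" "j1\<le>j2" "j2\<le>n"
  shows "(p i j1, p i j2) \<in> (EE \<Sigma> m n p)\<^sup>* \<and> (p i j2, p i j1) \<in> (EE' \<Sigma> m n p)\<^sup>*"
  using j(2,3)
proof (induction j2 rule: dec_induct)
  case base then show ?case by simp
next
  case (step k)
  show ?case
  proof (cases "p i k = p i (Suc k)")
    case True then show ?thesis using step by simp
  next
    case False
    have "(p i k, p i (Suc k)) \<in> EE \<Sigma> m n p \<and> (p i (Suc k), p i k) \<in> EE' \<Sigma> m n p"
      unfolding EE_def EE'_def using E_right[of i m k n p \<Sigma>] False pic i step j by auto
    moreover have "(p i j1, p i k) \<in> (EE \<Sigma> m n p)\<^sup>* \<and> (p i k, p i j1) \<in> (EE' \<Sigma> m n p)\<^sup>*"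
      using step by simp
    ultimately show ?thesis
      by (meson converse_rtrancl_into_rtrancl rtrancl_into_rtrancl)
  qed
qed

lemma path_v:
  assumes pic: "\<forall>i\<in>{1..m}. \<forall>j\<in>{1..n}. p i j \<in> \<Sigma>" and j: "1\<le>j" "j\<le>n" and i: "1\<le>i1" "i1\<le>i2" "i2\<le>m"
  shows "(p i1 j, p i2 j) \<in> (EE \<Sigma> m n p)\<^sup>* \<and> (p i1 j, p i2 j) \<in> (EE' \<Sigma> m n p)\<^sup>*"
  using i(2,3)
proof (induction i2 rule: dec_induct)
  case base then show ?case by simp
next
  case (step k)
  show ?case
  proof (cases "p k j = p (Suc k) j")
    case True then show ?thesis using step by simp
  next
    case False
    have "(p k j, p (Suc k) j) \<in> EE \<Sigma> m n p \<and> (p k j, p (Suc k) j) \<in> EE' \<Sigma> m n p"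
      unfolding EE_def EE'_def using E_down[of k m j n p \<Sigma>] False pic j step i by auto
    moreover have "(p i1 j, p k j) \<in> (EE \<Sigma> m n p)\<^sup>* \<and> (p i1 j, p k j) \<in> (EE' \<Sigma> m n p)\<^sup>*"
      using step by simp
    ultimately show ?thesis
      by (meson rtrancl_into_rtrancl)
  qed
qed

lemma path_E:
  assumes pic: "\<forall>i\<in>{1..m}. \<forall>j\<in>{1..n}. p i j \<in> \<Sigma>"
    and "1\<le>i1" "i1\<le>i2" "i2\<le>m" "1\<le>j1" "j1\<le>j2" "j2\<le>n"
  shows "(p i1 j1, p i2 j2) \<in> (EE \<Sigma> m n p)\<^sup>*"
proof -
  have "(p i1 j1, p i1 j2) \<in> (EE \<Sigma> m n p)\<^sup>*" using path_h[OF pic, of i1 j1 j2] assms by auto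
  moreover have "(p i1 j2, p i2 j2) \<in> (EE \<Sigma> m n p)\<^sup>*" using path_v[OF pic, of j2 i1 i2] assms by auto
  ultimately show ?thesis by (rule rtrancl_trans)
qed

lemma path_E':
  assumes pic: "\<forall>i\<in>{1..m}. \<forall>j\<in>{1..n}. p i j \<in> \<Sigma>"
    and "1\<le>i1" "i1\<le>i2" "i2\<le>m" "1\<le>j2" "j2\<le>j1" "j1\<le>n"
  shows "(p i1 j1, p i2 j2) \<in> (EE' \<Sigma> m n p)\<^sup>*"
proof -
  have "(p i1 j1, p i1 j2) \<in> (EE' \<Sigma> m n p)\<^sup>*" using path_h[OF pic, of i1 j2 j1] assms by auto
  moreover have "(p i1 j2, p i2 j2) \<in> (EE' \<Sigma> m n p)\<^sup>*" using path_v[OF pic, of j2 i1 i2] assms by auto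
  ultimately show ?thesis by (rule rtrancl_trans)
qed

lemma box_half:
  assumes pic: "\<forall>i\<in>{1..m}. \<forall>j\<in>{1..n}. p i j \<in> \<Sigma>"
    and ac: "acyclic (EE \<Sigma> m n p)" "acyclic (EE' \<Sigma> m n p)"
    and u: "(i1,j1) \<in> occ m n p c" and w: "(i2,j2) \<in> occ m n p c" and le: "i1 \<le> i2"
    and ij: "i1 \<le> i" "i \<le> i2" "min j1 j2 \<le> j" "j \<le> max j1 j2"
  shows "(i,j) \<in> occ m n p c"
proof -
  have b: "1 \<le> i1" "i2 \<le> m" "1 \<le> j1" "j1 \<le> n" "1 \<le> j2" "j2 \<le> n" "p i1 j1 = c" "p i2 j2 = c"
    using u w unfolding occ_def by auto
  have "p i j = c"
  proof (cases "j1 \<le> j2")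
    case True
    have "(c, p i j) \<in> (EE \<Sigma> m n p)\<^sup>*" using path_E[OF pic, of i1 i j1 j] b ij True by auto
    moreover have "(p i j, c) \<in> (EE \<Sigma> m n p)\<^sup>*" using path_E[OF pic, of i i2 j j2] b ij True by auto
    ultimately show ?thesis using acyc_eq[OF ac(1)] by metis
  next
    case False
    have "(c, p i j) \<in> (EE' \<Sigma> m n p)\<^sup>*" using path_E'[OF pic, of i1 i j j1] b ij False by auto
    moreover have "(p i j, c) \<in> (EE' \<Sigma> m n p)\<^sup>*" using path_E'[OF pic, of i i2 j2 j] b ij False by auto
    ultimately show ?thesis using acyc_eq[OF ac(2)] by metis
  qed
  then show ?thesis using b ij unfolding occ_def by auto
qed

lemma box_occ:
  assumes pic: "\<forall>i\<in>{1..m}. \<forall>j\<in>{1..n}. p i j \<in> \<Sigma>"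
    and ac: "acyclic (EE \<Sigma> m n p)" "acyclic (EE' \<Sigma> m n p)"
    and u: "(i1,j1) \<in> occ m n p c" and w: "(i2,j2) \<in> occ m n p c"
    and ij: "min i1 i2 \<le> i" "i \<le> max i1 i2" "min j1 j2 \<le> j" "j \<le> max j1 j2"
  shows "(i,j) \<in> occ m n p c"
proof (cases "i1 \<le> i2")
  case True
  then show ?thesis using box_half[OF pic ac u w True] ij by auto
next
  case False
  then show ?thesis using box_half[OF pic ac w u, of i j] ij by (auto simp: min_def max_def split: if_splits)
qed

lemma acyc_to_regional:
  assumes pic: "\<forall>i\<in>{1..m}. \<forall>j\<in>{1..n}. p i j \<in> \<Sigma>"
    and ac: "acyclic (EE \<Sigma> m n p)" "acyclic (EE' \<Sigma> m n p)"
  shows "regional m n p"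
proof -
  define P where "P = (\<lambda>(i,j). occ m n p (p i j)) ` ({1..m}\<times>{1..n})"
  have sd: "is_subdomain m n (occ m n p c)" if "(i,j) \<in> {1..m}\<times>{1..n}" "c = p i j" for i j c
  proof (rule box_sub)
    show "occ m n p c \<subseteq> {1..m} \<times> {1..n}" unfolding occ_def by auto
    show "occ m n p c \<noteq> {}" using that unfolding occ_def by auto
  next
    fix i1 j1 i2 j2 i j
    assume "(i1, j1) \<in> occ m n p c" "(i2, j2) \<in> occ m n p c" "min i1 i2 \<le> i" "i \<le> max i1 i2" "min j1 j2 \<le> j" "j \<le> max j1 j2"
    then show "(i, j) \<in> occ m n p c" using box_occ[OF pic ac] by blast
  qed
  have h1: "\<forall>D\<in>P. is_subdomain m n D \<and> (\<exists>C. homogeneous p D C)"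
  proof
    fix D assume "D \<in> P"
    then obtain i j where "(i,j) \<in> {1..m}\<times>{1..n}" "D = occ m n p (p i j)" unfolding P_def by auto
    then show "is_subdomain m n D \<and> (\<exists>C. homogeneous p D C)"
      using sd unfolding homogeneous_def occ_def by auto
  qed
  have h2: "\<forall>D\<in>P. \<forall>D'\<in>P. D \<noteq> D' \<longrightarrow> D \<inter> D' = {}" unfolding P_def occ_def by auto
  have h3: "\<Union>P = {1..m} \<times> {1..n}" unfolding P_def occ_def by auto
  have h4: "\<forall>D\<in>P. \<forall>D'\<in>P. \<forall>C C'. D \<noteq> D' \<longrightarrow> homogeneous p D C \<longrightarrow> homogeneous p D' C' \<longrightarrow> C \<noteq> C'"
    unfolding P_def occ_def homogeneous_def by fastforce
  have "regional_partition m n p P"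
    unfolding regional_partition_def homogeneous_partition_def using h1 h2 h3 h4 by blast
  then show ?thesis unfolding regional_def by blast
qed



lemma regional_to_acyc:
  assumes pic: "\<forall>i\<in>{1..m}. \<forall>j\<in>{1..n}. p i j \<in> \<Sigma>" and reg: "regional m n p"
  shows "acyclic (EE \<Sigma> m n p) \<and> acyclic (EE' \<Sigma> m n p)"
proof -
  obtain P where rp: "regional_partition m n p P" using reg unfolding regional_def by blast
  define App where "App = (\<lambda>(i,j). p i j) ` ({1..m}\<times>{1..n})"
  have hp1: "\<forall>D\<in>P. is_subdomain m n D \<and> (\<exists>C. homogeneous p D C)"
   and hp3: "\<Union>P = {1..m} \<times> {1..n}"
   and reg4: "\<forall>D\<in>P. \<forall>D'\<in>P. \<forall>C C'. D \<noteq> D' \<longrightarrow> homogeneous p D C \<longrightarrow> homogeneous p D' C' \<longrightarrow> C \<noteq> C'"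
    using rp unfolding regional_partition_def homogeneous_partition_def by simp_all
  have rect: "\<forall>c\<in>App. \<exists>r. occ m n p c = {fst r..fst (snd r)} \<times> {fst (snd (snd r))..snd (snd (snd r))}"
  proof
    fix c assume "c \<in> App"
    then obtain i j where ij: "(i,j) \<in> {1..m}\<times>{1..n}" "c = p i j" unfolding App_def by auto
    then have "(i,j) \<in> \<Union>P" using hp3 by simp
    then obtain D where D: "D \<in> P" "(i,j) \<in> D" by blast
    have "is_subdomain m n D" using hp1 D(1) by blast
    then obtain x x' y y' where Dr: "D = {x..x'}\<times>{y..y'}" "1 \<le> x" "x' \<le> m" "1 \<le> y" "y' \<le> n"
      unfolding is_subdomain_def by blast
    obtain C where C: "homogeneous p D C" using hp1 D(1) by blast
    have Cc: "C = c" using C D(2) ij(2) unfolding homogeneous_def by auto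
    have "occ m n p c = D"
    proof
      show "D \<subseteq> occ m n p c"
      proof clarify
        fix a b assume ab: "(a,b) \<in> D"
        then have "p a b = c" using C Cc unfolding homogeneous_def by auto
        moreover have "1 \<le> a" "a \<le> m" "1 \<le> b" "b \<le> n" using ab Dr by auto
        ultimately show "(a,b) \<in> occ m n p c" unfolding occ_def by simp
      qed
    next
      show "occ m n p c \<subseteq> D"
      proof clarify
        fix a b assume ab: "(a,b) \<in> occ m n p c"
        then have "(a,b) \<in> \<Union>P" using hp3 unfolding occ_def by auto
        then obtain D' where D': "D' \<in> P" "(a,b) \<in> D'" by blast
        obtain C' where C': "homogeneous p D' C'" using hp1 D'(1) by blast
        have "C' = c" using C' D'(2) ab unfolding homogeneous_def occ_def by auto
        have "D' = D"
        proof (rule ccontr)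
          assume "D' \<noteq> D"
          then have "C' \<noteq> C" using reg4 D'(1) D(1) C' C by blast
          then show False using \<open>C' = c\<close> Cc by simp
        qed
        then show "(a,b) \<in> D" using D' by simp
      qed
    qed
    then show "\<exists>r. occ m n p c = {fst r..fst (snd r)} \<times> {fst (snd (snd r))..snd (snd (snd r))}"
      using Dr by (intro exI[of _ "(x,x',y,y')"]) simp
  qed
  then obtain r where r: "\<forall>c\<in>App. occ m n p c = {fst (r c)..fst (snd (r c))} \<times> {fst (snd (snd (r c)))..snd (snd (snd (r c)))}"
    using bchoice[OF rect] by blast
  define a1 where "a1 c = fst (r c)" for c
  define a2 where "a2 c = fst (snd (r c))" for c
  define b1 where "b1 c = fst (snd (snd (r c)))" for c
  define b2 where "b2 c = snd (snd (snd (r c)))" for c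
  have oc: "\<And>c. c \<in> App \<Longrightarrow> occ m n p c = {a1 c..a2 c} \<times> {b1 c..b2 c}"
    using r unfolding a1_def a2_def b1_def b2_def by auto
  have cell: "p i j \<in> App \<and> a1 (p i j) \<le> i \<and> i \<le> a2 (p i j) \<and> b1 (p i j) \<le> j \<and> j \<le> b2 (p i j)"
    if "1 \<le> i" "i \<le> m" "1 \<le> j" "j \<le> n" for i j
  proof -
    have A: "p i j \<in> App" using that unfolding App_def by auto
    have "(i,j) \<in> occ m n p (p i j)" using that unfolding occ_def by auto
    then show ?thesis using oc[OF A] A by auto
  qed
  have fin: "finite App" unfolding App_def by auto
  have ord: "\<forall>c\<in>App. a1 c \<le> a2 c \<and> b1 c \<le> b2 c"
  proof
    fix c assume c: "c \<in> App"
    then obtain i j where "(i,j) \<in> {1..m}\<times>{1..n}" "c = p i j" unfolding App_def by auto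
    then show "a1 c \<le> a2 c \<and> b1 c \<le> b2 c" using cell[of i j] by auto
  qed
  have disj: "False" if "c \<in> App" "d \<in> App" "c \<noteq> d" "a1 c \<le> a2 d" "b1 c \<le> b2 d" "a1 d \<le> a2 c" "b1 d \<le> b2 c" for c d
  proof -
    have o1: "a1 c \<le> a2 c" "b1 c \<le> b2 c" "a1 d \<le> a2 d" "b1 d \<le> b2 d" using ord that(1,2) by auto
    define u1 where "u1 = max (a1 c) (a1 d)"
    define u2 where "u2 = max (b1 c) (b1 d)"
    have "u1 \<in> {a1 c..a2 c}" "u2 \<in> {b1 c..b2 c}" "u1 \<in> {a1 d..a2 d}" "u2 \<in> {b1 d..b2 d}"
      unfolding u1_def u2_def using that(4-7) o1 by simp_all
    then have "(u1,u2) \<in> occ m n p c" "(u1,u2) \<in> occ m n p d"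
      using oc[OF that(1)] oc[OF that(2)] by simp_all
    then have "p u1 u2 = c" "p u1 u2 = d" unfolding occ_def by simp_all
    then show False using that(3) by simp
  qed
  have w1: "wf (EE \<Sigma> m n p)"
  proof (rule wf_from_rect[where App = App and ?P1.0 = "\<lambda>c. int (a1 c)" and ?Q1.0 = "\<lambda>c. int (a2 c)"
        and ?P2.0 = "\<lambda>c. int (b1 c)" and ?Q2.0 = "\<lambda>c. int (b2 c)"])
    show "finite App" by fact
  next
    fix y z assume yz: "(y,z) \<in> EE \<Sigma> m n p"
    have "y \<noteq> z \<and> (\<exists>i j i' j'. 1\<le>i \<and> i\<le>m \<and> 1\<le>j \<and> j\<le>n \<and> 1 \<le> i' \<and> i' \<le> m \<and> 1\<le>j' \<and> j'\<le>n
     \<and> p i j = y \<and> p i' j' = z \<and> i \<le> i' \<and> j \<le> j')"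
      using E_D[of y z \<Sigma> m n p] yz unfolding EE_def by blast
    then obtain i j i' j' where yz': "y \<noteq> z" and ij: "1\<le>i" "i\<le>m" "1\<le>j" "j\<le>n" "1 \<le> i'" "i' \<le> m" "1\<le>j'" "j'\<le>n"
      "p i j = y" "p i' j' = z" "i \<le> i'" "j \<le> j'" by blast
    have c1: "y \<in> App" "a1 y \<le> i" "i \<le> a2 y" "b1 y \<le> j" "j \<le> b2 y" using cell[OF ij(1-4)] ij(9) by auto
    have c2: "z \<in> App" "a1 z \<le> i'" "i' \<le> a2 z" "b1 z \<le> j'" "j' \<le> b2 z" using cell[OF ij(5-8)] ij(10) by auto
    have "a1 y \<le> a2 z" "b1 y \<le> b2 z" using c1 c2 ij by linarith+
    then show "y \<in> App \<and> z \<in> App \<and> y \<noteq> z \<and> int (a1 y) \<le> int (a2 z) \<and> int (b1 y) \<le> int (b2 z)"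
      using c1(1) c2(1) yz' by simp
  next
    show "\<forall>c\<in>App. int (a1 c) \<le> int (a2 c) \<and> int (b1 c) \<le> int (b2 c)" using ord by auto
  next
    show "\<forall>c\<in>App. \<forall>d\<in>App. c \<noteq> d \<longrightarrow> \<not> (int (a1 c) \<le> int (a2 d) \<and> int (b1 c) \<le> int (b2 d) \<and> int (a1 d) \<le> int (a2 c) \<and> int (b1 d) \<le> int (b2 c))"
    proof (intro ballI impI notI)
      fix c d assume "c \<in> App" "d \<in> App" "c \<noteq> d"
        "int (a1 c) \<le> int (a2 d) \<and> int (b1 c) \<le> int (b2 d) \<and> int (a1 d) \<le> int (a2 c) \<and> int (b1 d) \<le> int (b2 c)"
      then show False using disj[of c d] by simp
    qed
  qed
  have w2: "wf (EE' \<Sigma> m n p)"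
  proof (rule wf_from_rect[where App = App and ?P1.0 = "\<lambda>c. int (a1 c)" and ?Q1.0 = "\<lambda>c. int (a2 c)"
        and ?P2.0 = "\<lambda>c. - int (b2 c)" and ?Q2.0 = "\<lambda>c. - int (b1 c)"])
    show "finite App" by fact
  next
    fix y z assume yz: "(y,z) \<in> EE' \<Sigma> m n p"
    have "y \<noteq> z \<and> (\<exists>i j i' j'. 1\<le>i \<and> i\<le>m \<and> 1\<le>j \<and> j\<le>n \<and> 1 \<le> i' \<and> i' \<le> m \<and> 1\<le>j' \<and> j'\<le>n
     \<and> p i j = y \<and> p i' j' = z \<and> i \<le> i' \<and> j' \<le> j)"
      using E'_D[of y z \<Sigma> m n p] yz unfolding EE'_def by blast
    then obtain i j i' j' where yz': "y \<noteq> z" and ij: "1\<le>i" "i\<le>m" "1\<le>j" "j\<le>n" "1 \<le> i'" "i' \<le> m" "1\<le>j'" "j'\<le>n"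
      "p i j = y" "p i' j' = z" "i \<le> i'" "j' \<le> j" by blast
    have c1: "y \<in> App" "a1 y \<le> i" "i \<le> a2 y" "b1 y \<le> j" "j \<le> b2 y" using cell[OF ij(1-4)] ij(9) by auto
    have c2: "z \<in> App" "a1 z \<le> i'" "i' \<le> a2 z" "b1 z \<le> j'" "j' \<le> b2 z" using cell[OF ij(5-8)] ij(10) by auto
    have "a1 y \<le> a2 z" "b1 z \<le> b2 y" using c1 c2 ij by linarith+
    then show "y \<in> App \<and> z \<in> App \<and> y \<noteq> z \<and> int (a1 y) \<le> int (a2 z) \<and> - int (b2 y) \<le> - int (b1 z)"
      using c1(1) c2(1) yz' by simp
  next
    show "\<forall>c\<in>App. int (a1 c) \<le> int (a2 c) \<and> - int (b2 c) \<le> - int (b1 c)" using ord by auto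
  next
    show "\<forall>c\<in>App. \<forall>d\<in>App. c \<noteq> d \<longrightarrow> \<not> (int (a1 c) \<le> int (a2 d) \<and> - int (b2 c) \<le> - int (b1 d) \<and> int (a1 d) \<le> int (a2 c) \<and> - int (b2 d) \<le> - int (b1 c))"
    proof (intro ballI impI notI)
      fix c d assume "c \<in> App" "d \<in> App" "c \<noteq> d"
        "int (a1 c) \<le> int (a2 d) \<and> - int (b2 c) \<le> - int (b1 d) \<and> int (a1 d) \<le> int (a2 c) \<and> - int (b2 d) \<le> - int (b1 c)"
      then show False using disj[of c d] by simp
    qed
  qed
  show ?thesis using w1 w2 by (simp add: wf_acyclic)
qed

theorem proposition3:
  fixes \<Sigma> :: "'a set" and m n :: nat and p :: "nat \<Rightarrow> nat \<Rightarrow> 'a"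
  assumes "finite \<Sigma>"
    and "is_picture \<Sigma> m n p"
  shows "regional m n p \<longleftrightarrow>
           (let \<theta> = tiles (m + 2) (n + 2) (frame m n p)
            in acyclic (restrict_sigma \<Sigma> (A_set \<theta>)) \<and> acyclic (restrict_sigma \<Sigma> (A'_set \<theta>)))"
proof -
  have pic: "\<forall>i\<in>{1..m}. \<forall>j\<in>{1..n}. p i j \<in> \<Sigma>" using assms(2) unfolding is_picture_def by blast
  show ?thesis
    using regional_to_acyc[OF pic] acyc_to_regional[OF pic] unfolding Let_def EE_def EE'_def by blast
qed

end
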